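(* Let $\Delta_0=\{x_0,\dots,x_d\}\subset\mathbb{R}^d$ be the vertex set of a regular simplex of edge length $1$ with centroid at the origin ($\sum_i x_i=0$), and let $\Delta'$ be the vertex set of another regular simplex of edge length $1$. If $\mathrm{dist}_H(\Delta_0,\Delta')<\tfrac12$, then there exist $\tau\in\mathbb{R}^d$ and $R\in O(d)$ such that the map $x\mapsto Rx+\tau$ maps $\Delta_0$ onto $\Delta'$ and \[ \mathrm{dist}_H(\Delta_0,\Delta')\;\ge\;\frac{1}{2\sqrt{d+1}}\bigl(\|R-I_d\|_2+\|\tau\|_2\bigr), \] where $\|\cdot\|_2$ on matrices is the operator (spectral) norm.
   Context: A regular simplex of edge length $1$ in $\mathbb{R}^d$ is given by its vertex set: $d+1$ points at pairwise distance exactly $1$. For nonempty compact $A,B\subset\mathbb{R}^d$, $\mathrm{dist}_H(A,B)=\max\{\sup_{a\in A}\inf_{b\in B}\|a-b\|_2,\ \sup_{b\in B}\inf_{a\in A}\|a-b\|_2\}$. *)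

theory Defs
  imports "HOL-Analysis.Analysis"
begin

text \<open>Hausdorff distance between nonempty compact sets, as in the paper
  (only used here for finite nonempty sets, where SUP/INF are attained).\<close>
definition hausdist_H :: "'a::metric_space set \<Rightarrow> 'a set \<Rightarrow> real" where
  "hausdist_H A B =
     max (SUP a\<in>A. INF b\<in>B. dist a b) (SUP b\<in>B. INF a\<in>A. dist a b)"

definition regular_unit_simplex :: "(nat \<Rightarrow> real^'n) \<Rightarrow> bool" where
  "regular_unit_simplex x \<longleftrightarrow>
     (\<forall>i\<le>CARD('n). \<forall>j\<le>CARD('n). i \<noteq> j \<longrightarrow> dist (x i) (x j) = 1)"

end

theory Submission
  imports Defs
begin

lemma simplex_gram:
  fixes z :: "nat \<Rightarrow> real^'n"
  assumes reg: "regular_unit_simplex z" and s0: "(\<Sum>i\<le>CARD('n). z i) = 0"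
    and ij: "i \<le> CARD('n)" "j \<le> CARD('n)"
  shows "z i \<bullet> z j = (if i = j then real CARD('n) / (2*(real CARD('n)+1)) else -1/(2*(real CARD('n)+1)))"
proof -
  define D where "D = CARD('n)"
  define S where "S = (\<Sum>j\<le>D. z j \<bullet> z j)"
  have d1: "(z a - z b) \<bullet> (z a - z b) = (if a = b then 0 else 1)" if "a \<le> D" "b \<le> D" for a b
  proof -
    have "a \<noteq> b \<Longrightarrow> norm (z a - z b) = 1" using reg that unfolding regular_unit_simplex_def D_def
      by (metis dist_norm)
    then show ?thesis by (simp add: power2_norm_eq_inner[symmetric])
  qed
  have ex: "(z a - z b) \<bullet> (z a - z b) = z a \<bullet> z a - 2 * (z a \<bullet> z b) + z b \<bullet> z b" for a b
    by (simp add: inner_diff inner_commute)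
  have row: "(real D + 1) * (z a \<bullet> z a) + S = real D" if "a \<le> D" for a
  proof -
    have "(\<Sum>b\<le>D. (z a - z b) \<bullet> (z a - z b)) = (\<Sum>b\<le>D. (if a = b then 0 else 1::real))"
      using d1 that by (intro sum.cong) auto
    also have "\<dots> = real D"
    proof -
      have "(\<Sum>b\<le>D. (if a = b then 0 else 1::real)) = (\<Sum>b\<in>{..D}-{a}. 1)"
        by (rule sum.mono_neutral_cong_right) auto
      also have "\<dots> = real D" using that by simp
      finally show ?thesis .
    qed
    finally have A: "(\<Sum>b\<le>D. (z a - z b) \<bullet> (z a - z b)) = real D" .
    have "(\<Sum>b\<le>D. (z a - z b) \<bullet> (z a - z b)) = (\<Sum>b\<le>D. z a \<bullet> z a) - 2 * (\<Sum>b\<le>D. z a \<bullet> z b) + S"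
      unfolding ex S_def by (simp add: sum.distrib sum_subtractf sum_distrib_left)
    also have "(\<Sum>b\<le>D. z a \<bullet> z b) = 0"
      using s0 unfolding D_def by (simp add: inner_sum_right[symmetric])
    finally show ?thesis using A by (simp add: algebra_simps)
  qed
  have "(\<Sum>a\<le>D. (real D + 1) * (z a \<bullet> z a) + S) = (\<Sum>a\<le>D. real D)"
    using row by (intro sum.cong) auto
  then have "(real D + 1) * S + (real D + 1) * S = (real D + 1) * real D"
    unfolding S_def by (simp add: sum.distrib sum_distrib_left[symmetric] algebra_simps)
  then have "(real D + 1) * (2 * S) = (real D + 1) * real D" by (simp add: algebra_simps)
  then have "2 * S = real D" by (subst (asm) mult_left_cancel) auto
  then have SS: "S = real D / 2" by simp
  have diag: "z a \<bullet> z a = real D / (2 * (real D + 1))" if "a \<le> D" for a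
    using row[OF that] SS by (simp add: field_simps)
  show ?thesis
  proof (cases "i = j")
    case True then show ?thesis using diag ij D_def by simp
  next
    case False
    have "z i \<bullet> z i - 2 * (z i \<bullet> z j) + z j \<bullet> z j = 1" using d1[of i j] ex[of i j] ij False D_def by simp
    then have "z i \<bullet> z j = (real D / (2 * (real D + 1)) + real D / (2 * (real D + 1)) - 1) / 2"
      using diag[of i] diag[of j] ij D_def by simp
    also have "\<dots> = (real D / (real D + 1) - 1) / 2" proof -
      have "real D / (2 * (real D + 1)) + real D / (2 * (real D + 1)) = real D / (real D + 1)"
      proof -
        have "real D / (2 * (real D + 1)) + real D / (2 * (real D + 1)) = (2 * real D) / (2 * (real D + 1))"
          by (simp add: add_divide_distrib[symmetric])
        also have "\<dots> = real D / (real D + 1)" by (rule mult_divide_mult_cancel_left) simp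
        finally show ?thesis .
      qed
      then show ?thesis by simp
    qed
    also have "\<dots> = -1/(2*(real D+1))"
      by (simp add: divide_simps)
    finally show ?thesis using False D_def by simp
  qed
qed

lemma simplex_inj:
  fixes z :: "nat \<Rightarrow> real^'n"
  assumes reg: "regular_unit_simplex z"
  shows "inj_on z {..CARD('n)}"
  using reg unfolding regular_unit_simplex_def inj_on_def by fastforce

lemma simplex_gram':
  fixes z :: "nat \<Rightarrow> real^'n"
  assumes reg: "regular_unit_simplex z" and s0: "(\<Sum>i\<le>CARD('n). z i) = 0"
    and ij: "i \<le> CARD('n)" "j \<le> CARD('n)"
  shows "z i \<bullet> z j = -1/(2*(real CARD('n)+1)) + (if i = j then 1/2 else 0)"
proof -
  have "real CARD('n) / (2*(real CARD('n)+1)) = -1/(2*(real CARD('n)+1)) + 1/2"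
    by (simp add: field_simps)
  then show ?thesis using simplex_gram[OF assms] by simp
qed

lemma simplex_frame:
  fixes z :: "nat \<Rightarrow> real^'n"
  assumes reg: "regular_unit_simplex z" and s0: "(\<Sum>i\<le>CARD('n). z i) = 0"
  shows "2 *\<^sub>R (\<Sum>i\<le>CARD('n). (z i \<bullet> v) *\<^sub>R z i) = v"
proof -
  define D where "D = CARD('n)"
  define N where "N = real D + 1"
  have Npos: "N > 0" unfolding N_def by simp
  define g where "g = (\<lambda>v. 2 *\<^sub>R (\<Sum>i\<le>D. (z i \<bullet> v) *\<^sub>R z i) - v)"
  have lg: "linear g" unfolding g_def
    by (rule linearI) (simp_all add: inner_add_right scaleR_add_left sum.distrib scaleR_right.add
        scaleR_sum_right algebra_simps)
  have gr: "z i \<bullet> z j = -1/(2*N) + (if i = j then 1/2 else 0)" if "i \<le> D" "j \<le> D" for i j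
    using simplex_gram'[OF reg s0] that unfolding D_def N_def by (simp add: inner_commute)
  have gz: "g (z j) = 0" if "j \<le> D" for j
  proof -
    have "(\<Sum>i\<le>D. (z i \<bullet> z j) *\<^sub>R z i) = (\<Sum>i\<le>D. (if i = j then (1/2) *\<^sub>R z i else 0) - (1/(2*N)) *\<^sub>R z i)"
      using gr that by (intro sum.cong) (auto simp: scaleR_left_distrib scaleR_diff_left)
    also have "\<dots> = (\<Sum>i\<le>D. (if i = j then (1/2) *\<^sub>R z i else 0)) - (1/(2*N)) *\<^sub>R (\<Sum>i\<le>D. z i)"
      by (simp add: sum_subtractf scaleR_sum_right)
    also have "\<dots> = (1/2) *\<^sub>R z j" using s0 that unfolding D_def by simp
    finally show ?thesis unfolding g_def by simp
  qed
  define B where "B = z ` {1..D}"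
  have injz: "inj_on z {1..D}" using simplex_inj[OF reg] unfolding D_def
    by (rule inj_on_subset) auto
  have cardB: "card B = D" unfolding B_def using card_image[OF injz] by simp
  have indB: "independent B"
  proof
    assume "dependent B"
    then obtain u where u: "\<exists>v\<in>B. u v \<noteq> 0" "(\<Sum>v\<in>B. u v *\<^sub>R v) = 0"
      using dependent_finite[of B] unfolding B_def by auto
    define c where "c i = u (z i)" for i
    have sc: "(\<Sum>i\<in>{1..D}. c i *\<^sub>R z i) = 0"
      using u(2) sum.reindex[OF injz, of "\<lambda>v. u v *\<^sub>R v"] unfolding B_def c_def by simp
    define C where "C = (\<Sum>i\<in>{1..D}. c i)"
    have cj: "c j = C / N" if "j \<in> {1..D}" for j
    proof -
      have "0 = (\<Sum>i\<in>{1..D}. c i *\<^sub>R z i) \<bullet> z j" using sc by simp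
      also have "\<dots> = (\<Sum>i\<in>{1..D}. c i * (z i \<bullet> z j))" by (simp add: inner_sum_left)
      also have "\<dots> = (\<Sum>i\<in>{1..D}. c i * (-1/(2*N)) + (if i = j then c i / 2 else 0))"
      proof (rule sum.cong)
        fix i assume "i \<in> {1..D}"
        then show "c i * (z i \<bullet> z j) = c i * (-1/(2*N)) + (if i = j then c i / 2 else 0)"
          using gr[of i j] that by (simp add: right_diff_distrib)
      qed simp
      also have "\<dots> = C * (-1/(2*N)) + c j / 2"
        using that by (simp add: sum_subtractf C_def sum_divide_distrib)
      finally have "c j / 2 = C / (2 * N)" by simp
      then show ?thesis using Npos by (simp add: field_simps)
    qed
    have "C = (\<Sum>i\<in>{1..D}. c i)" by (simp add: C_def)
    also have "\<dots> = (\<Sum>i\<in>{1..D}. C / N)" using cj by (intro sum.cong) auto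
    also have "\<dots> = real D * C / N" by simp
    finally have "C * N = real D * C" using Npos by (simp add: field_simps)
    then have "C = 0" unfolding N_def by (simp add: algebra_simps)
    then have "\<forall>j\<in>{1..D}. c j = 0" using cj by simp
    then show False using u(1) unfolding B_def c_def by auto
  qed
  have "dim B = DIM(real^'n)"
    using dim_span_eq_card_independent[OF indB] cardB dim_span[of B] unfolding D_def by simp
  then have spB: "span B = UNIV" using dim_eq_full by blast
  have "g v = 0"
  proof (rule linear_eq_0_on_span[OF lg, of B v])
    show "\<And>x. x \<in> B \<Longrightarrow> g x = 0" unfolding B_def using gz by auto
    show "v \<in> span B" by (simp add: spB)
  qed
  then have "2 *\<^sub>R (\<Sum>i\<le>D. (z i \<bullet> v) *\<^sub>R z i) - v = 0" by (simp only: g_def)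
  then show ?thesis unfolding D_def by (simp only: right_minus_eq)
qed

lemma exists_close:
  fixes f :: "'a \<Rightarrow> 'b \<Rightarrow> real"
  assumes "finite A" "finite B" "B \<noteq> {}" "a \<in> A"
  shows "\<exists>b\<in>B. f a b \<le> (SUP a\<in>A. INF b\<in>B. f a b)"
proof -
  have "(INF b\<in>B. f a b) = Min (f a ` B)"
    using assms by (simp add: cInf_eq_Min)
  moreover have "Min (f a ` B) \<in> f a ` B" using assms by simp
  ultimately obtain b where b: "b \<in> B" "f a b = (INF b\<in>B. f a b)" by auto
  have "(INF b\<in>B. f a b) \<le> (SUP a\<in>A. INF b\<in>B. f a b)"
    using assms by (intro cSUP_upper) auto
  then show ?thesis using b by (intro bexI[OF _ b(1)]) (simp only: b(2))
qed

lemma iso_construct: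
  fixes x w :: "nat \<Rightarrow> real^'n"
  assumes rx: "regular_unit_simplex x" and sx: "(\<Sum>i\<le>CARD('n). x i) = 0"
    and rw: "regular_unit_simplex w" and sw: "(\<Sum>i\<le>CARD('n). w i) = 0"
  defines "f \<equiv> (\<lambda>v. \<Sum>i\<le>CARD('n). (2 * (x i \<bullet> v)) *\<^sub>R w i)"
  shows "linear f" "\<And>v. norm (f v) = norm v" "\<And>j. j \<le> CARD('n) \<Longrightarrow> f (x j) = w j"
proof -
  define D where "D = CARD('n)"
  have gr: "x i \<bullet> x k = w i \<bullet> w k" if "i \<le> D" "k \<le> D" for i k
    using simplex_gram[OF rx sx, of i k] simplex_gram[OF rw sw, of i k] that unfolding D_def by simp
  show "linear f" unfolding f_def
    by (rule linearI) (simp_all add: inner_add_right scaleR_add_left sum.distrib scaleR_right.add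
        scaleR_sum_right algebra_simps)
  show "f (x j) = w j" if "j \<le> CARD('n)" for j
  proof -
    have "f (x j) = 2 *\<^sub>R (\<Sum>i\<le>CARD('n). (w i \<bullet> w j) *\<^sub>R w i)"
      unfolding f_def scaleR_sum_right using gr that unfolding D_def
      by (intro sum.cong) auto
    also have "\<dots> = w j" by (rule simplex_frame[OF rw sw])
    finally show ?thesis .
  qed
  show "norm (f v) = norm v" for v
  proof -
    define a where "a i = 2 * (x i \<bullet> v)" for i
    have "f v \<bullet> f v = (\<Sum>i\<le>D. \<Sum>k\<le>D. a i * a k * (w i \<bullet> w k))"
      unfolding f_def a_def D_def
      by (simp add: inner_sum_left inner_sum_right sum_distrib_left algebra_simps)
         (intro sum.cong refl, simp add: inner_commute)
    also have "\<dots> = (\<Sum>i\<le>D. \<Sum>k\<le>D. a i * a k * (x i \<bullet> x k))"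
      using gr by (intro sum.cong) auto
    also have "\<dots> = (\<Sum>i\<le>D. a i *\<^sub>R x i) \<bullet> (\<Sum>i\<le>D. a i *\<^sub>R x i)"
      by (simp add: inner_sum_left inner_sum_right sum_distrib_left algebra_simps)
         (intro sum.cong refl, simp add: inner_commute)
    also have "(\<Sum>i\<le>D. a i *\<^sub>R x i) = v"
      using simplex_frame[OF rx sx, of v] unfolding a_def D_def
      by (simp add: scaleR_sum_right)
    finally have "f v \<bullet> f v = v \<bullet> v" .
    then show ?thesis by (simp add: norm_eq_sqrt_inner)
  qed
qed

lemma arith_aux:
  fixes N h :: real
  assumes N: "N \<ge> 3" and h: "h \<ge> 0"
  shows "2 * h * sqrt (N/2) + h \<le> 2 * sqrt N * h"
proof -
  define s where "s = sqrt N"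
  define t where "t = sqrt 2"
  have t1: "(1414/1000) \<le> t" unfolding t_def by (rule real_le_rsqrt) (simp add: power2_eq_square)
  have s1: "(1732/1000) \<le> s" unfolding s_def using N by (intro real_le_rsqrt) (simp add: power2_eq_square)
  have tpos: "t > 0" unfolding t_def by simp
  have "(1732/1000) * (t - 1) \<le> s * (t - 1)" using s1 t1 by (intro mult_right_mono) auto
  then have h1: "(1732/1000) * (t - 1) \<le> s * t - s" by (simp add: right_diff_distrib)
  then have h2: "(1732/1000) * t - 1732/1000 \<le> s * t - s" by (simp add: right_diff_distrib)
  have key0: "2 * s + t \<le> 2 * (s * t)" using h2 t1 by linarith
  then have key: "2 * s + t \<le> 2 * s * t" by simp
  have "sqrt (N/2) = s / t" unfolding s_def t_def by (simp add: real_sqrt_divide)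
  moreover have "2 * (s / t) + 1 \<le> 2 * s"
  proof -
    have "2 * (s / t) + 1 = (2 * s + t) / t" using tpos by (simp add: field_simps)
    also have "\<dots> \<le> (2 * s * t) / t" using key tpos by (intro divide_right_mono) auto
    also have "\<dots> = 2 * s" using tpos by simp
    finally show ?thesis .
  qed
  ultimately have "2 * sqrt (N/2) + 1 \<le> 2 * sqrt N" unfolding s_def by simp
  then have "h * (2 * sqrt (N/2) + 1) \<le> h * (2 * sqrt N)" using h by (rule mult_left_mono)
  then show ?thesis by (simp add: algebra_simps)
qed

lemma dim1_case:
  fixes x w :: "nat \<Rightarrow> real^'n"
  assumes rx: "regular_unit_simplex x" and sx: "(\<Sum>i\<le>CARD('n). x i) = 0"
    and rw: "regular_unit_simplex w" and sw: "(\<Sum>i\<le>CARD('n). w i) = 0"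
    and d1: "CARD('n) = 1" and cl: "norm ((w 0 - x 0) - (w 1 - x 1)) < 1"
  shows "w 0 = x 0 \<and> w 1 = x 1"
proof -
  have at1: "{..CARD('n)} = {0, 1::nat}" using d1 by auto
  have "x 0 + x 1 = 0" using sx unfolding at1 by simp
  then have x1: "x 1 = - x 0" by (simp only: add_eq_0_iff)
  have "w 0 + w 1 = 0" using sw unfolding at1 by simp
  then have w1: "w 1 = - w 0" by (simp only: add_eq_0_iff)
  have xx: "x 0 \<bullet> x 0 = 1/4" using simplex_gram[OF rx sx, of 0 0] d1 by simp
  have ww: "w 0 \<bullet> w 0 = 1/4" using simplex_gram[OF rw sw, of 0 0] d1 by simp
  define a where "a = x 0 \<bullet> w 0"
  have "2 *\<^sub>R (\<Sum>i\<le>CARD('n). (x i \<bullet> w 0) *\<^sub>R x i) = w 0" by (rule simplex_frame[OF rx sx])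
  then have fr0: "w 0 = (2 * a) *\<^sub>R x 0 + (2 * (x 1 \<bullet> w 0)) *\<^sub>R x 1"
    unfolding at1 a_def by (simp add: scaleR_add_right)
  have "(2 * (x 1 \<bullet> w 0)) *\<^sub>R x 1 = (2 * a) *\<^sub>R x 0" unfolding x1 a_def by simp
  with fr0 have w0: "w 0 = (4 * a) *\<^sub>R x 0" by (simp add: scaleR_left_distrib[symmetric])
  have "w 0 \<bullet> w 0 = (16 * a^2) * (x 0 \<bullet> x 0)" unfolding w0 by (simp add: power2_eq_square)
  then have a2: "a^2 = 1/16" using xx ww by simp
  have e1: "(w 0 - x 0) - (w 1 - x 1) = 2 *\<^sub>R (w 0 - x 0)" unfolding w1 x1 by (simp add: scaleR_2)
  have e2: "w 0 - x 0 = (4 * a - 1) *\<^sub>R x 0" unfolding w0 by (simp add: scaleR_diff_left)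
  have "norm ((w 0 - x 0) - (w 1 - x 1)) = \<bar>2 * (4 * a - 1)\<bar> * norm (x 0)"
    unfolding e1 unfolding e2 by (simp add: abs_mult)
  also have "norm (x 0) = 1/2" unfolding norm_eq_sqrt_inner xx by (simp add: real_sqrt_divide)
  finally have "\<bar>4 * a - 1\<bar> < 1" using cl by simp
  then have "a > 0" by simp
  have "(a - 1/4) * (a + 1/4) = 0" using a2 by (simp add: algebra_simps power2_eq_square)
  with \<open>a > 0\<close> have "a = 1/4" by simp
  then have "4 * a = 1" by simp
  then have "w 0 = x 0" using w0 by simp
  then show ?thesis using w1 x1 by simp
qed

theorem mainTheorem10:
  fixes x y :: "nat \<Rightarrow> real^'n"
  assumes "regular_unit_simplex x"
    and "(\<Sum>i\<le>CARD('n). x i) = 0"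
    and "regular_unit_simplex y"
    and "hausdist_H (x ` {..CARD('n)}) (y ` {..CARD('n)}) < 1/2"
  shows "\<exists>(\<tau>::real^'n) (R::real^'n^'n).
           orthogonal_matrix R \<and>
           (\<lambda>v. R *v v + \<tau>) ` (x ` {..CARD('n)}) = y ` {..CARD('n)} \<and>
           hausdist_H (x ` {..CARD('n)}) (y ` {..CARD('n)})
             \<ge> 1 / (2 * sqrt (real CARD('n) + 1)) *
                 (onorm (\<lambda>v. (R - mat 1) *v v) + norm \<tau>)"
proof -
  note rx = assms(1) and sx = assms(2) and ry = assms(3)
  define D where "D = CARD('n)"
  define h where "h = hausdist_H (x ` {..D}) (y ` {..D})"
  have hlt: "h < 1/2" using assms(4) unfolding h_def D_def .
  have close1: "\<exists>j\<le>D. dist (x i) (y j) \<le> h" if iD: "i \<le> D" for i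
  proof -
    obtain b where b: "b \<in> y ` {..D}"
      "dist (x i) b \<le> (SUP a\<in>x ` {..D}. INF b\<in>y ` {..D}. dist a b)"
      using exists_close[of "x ` {..D}" "y ` {..D}" "x i" dist] iD by blast
    moreover have "(SUP a\<in>x ` {..D}. INF b\<in>y ` {..D}. dist a b) \<le> h"
      unfolding h_def hausdist_H_def by simp
    ultimately show ?thesis by force
  qed
  have close2: "\<exists>i\<le>D. dist (x i) (y j) \<le> h" if jD: "j \<le> D" for j
  proof -
    obtain a where a: "a \<in> x ` {..D}"
      "dist a (y j) \<le> (SUP b\<in>y ` {..D}. INF a\<in>x ` {..D}. dist a b)"
      using exists_close[of "y ` {..D}" "x ` {..D}" "y j" "\<lambda>b a. dist a b"] jD by blast
    moreover have "(SUP b\<in>y ` {..D}. INF a\<in>x ` {..D}. dist a b) \<le> h"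
      unfolding h_def hausdist_H_def by simp
    ultimately show ?thesis by force
  qed
  have h0: "h \<ge> 0" using close1[of 0] by (auto intro: order_trans[OF zero_le_dist])
  have uniq: "j = k" if "i \<le> D" "j \<le> D" "k \<le> D" "dist (x i) (y j) \<le> h" "dist (x i) (y k) \<le> h" for i j k
  proof (rule ccontr)
    assume "j \<noteq> k"
    then have "dist (y j) (y k) = 1" using ry that unfolding regular_unit_simplex_def D_def by auto
    moreover have "dist (y j) (y k) \<le> dist (x i) (y j) + dist (x i) (y k)" by (rule dist_triangle3)
    ultimately show False using that hlt by linarith
  qed
  define \<sigma> where "\<sigma> i = (SOME j. j \<le> D \<and> dist (x i) (y j) \<le> h)" for i
  have \<sigma>: "\<sigma> i \<le> D \<and> dist (x i) (y (\<sigma> i)) \<le> h" if "i \<le> D" for i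
    unfolding \<sigma>_def using close1[OF that] by (rule someI_ex) 
  have \<sigma>inj: "i = k" if "i \<le> D" "k \<le> D" "\<sigma> i = \<sigma> k" for i k
  proof (rule ccontr)
    assume "i \<noteq> k"
    then have "dist (x i) (x k) = 1" using rx that unfolding regular_unit_simplex_def D_def by auto
    moreover have "dist (x i) (x k) \<le> dist (x i) (y (\<sigma> i)) + dist (x k) (y (\<sigma> i))" by (rule dist_triangle2)
    moreover have "dist (x i) (y (\<sigma> i)) \<le> h" using \<sigma>[OF that(1)] by simp
    moreover have "dist (x k) (y (\<sigma> i)) \<le> h" using \<sigma>[OF that(2)] that(3) by simp
    ultimately show False using hlt by linarith
  qed
  have \<sigma>surj: "\<exists>i\<le>D. \<sigma> i = j" if jD: "j \<le> D" for j
  proof -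
    obtain i where i: "i \<le> D" "dist (x i) (y j) \<le> h" using close2[OF jD] by auto
    then have "\<sigma> i = j" using uniq[of i "\<sigma> i" j] \<sigma>[OF i(1)] jD by auto
    then show ?thesis using i by auto
  qed
  define y' where "y' i = y (\<sigma> i)" for i
  have ry': "regular_unit_simplex y'"
    unfolding regular_unit_simplex_def y'_def
  proof (intro allI impI)
    fix i j assume ij: "i \<le> CARD('n)" "j \<le> CARD('n)" "i \<noteq> j"
    then have "\<sigma> i \<noteq> \<sigma> j" using \<sigma>inj unfolding D_def by auto
    then show "dist (y (\<sigma> i)) (y (\<sigma> j)) = 1"
      using ry ij \<sigma> unfolding regular_unit_simplex_def D_def by auto
  qed
  have Yeq: "y' ` {..D} = y ` {..D}"
  proof
    show "y' ` {..D} \<subseteq> y ` {..D}" unfolding y'_def using \<sigma> by auto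
    show "y ` {..D} \<subseteq> y' ` {..D}"
    proof
      fix b assume "b \<in> y ` {..D}"
      then obtain j where j: "j \<le> D" "b = y j" by auto
      then obtain i where "i \<le> D" "\<sigma> i = j" using \<sigma>surj by auto
      then show "b \<in> y' ` {..D}" unfolding y'_def using j by auto
    qed
  qed
  have e: "norm (y' i - x i) \<le> h" if "i \<le> D" for i
    using \<sigma>[OF that] unfolding y'_def by (simp add: dist_norm norm_minus_commute)
  define c where "c = (1 / (real D + 1)) *\<^sub>R (\<Sum>i\<le>D. y' i)"
  define w where "w i = y' i - c" for i
  have rw: "regular_unit_simplex w" using ry' unfolding regular_unit_simplex_def w_def
    by (simp add: dist_norm)
  have sumy': "(\<Sum>i\<le>D. y' i) = (real D + 1) *\<^sub>R c"
    unfolding c_def by simp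
  have sw: "(\<Sum>i\<le>CARD('n). w i) = 0"
    unfolding w_def D_def[symmetric] by (simp add: sum_subtractf sumy' sum_constant_scaleR del: sum_constant)
  define f where "f = (\<lambda>v. \<Sum>i\<le>CARD('n). (2 * (x i \<bullet> v)) *\<^sub>R w i)"
  have lf: "linear f" and nf: "\<And>v. norm (f v) = norm v" and fx: "\<And>j. j \<le> CARD('n) \<Longrightarrow> f (x j) = w j"
    using iso_construct[OF rx sx rw sw] unfolding f_def by auto
  define R where "R = matrix f"
  have Rv: "R *v v = f v" for v
    unfolding R_def using matrix_vector_mul(2)[OF lf] by metis
  have orth: "orthogonal_matrix R"
    unfolding R_def using orthogonal_transformation_matrix[of f] orthogonal_transformation[of f] lf nf by auto
  have img: "(\<lambda>v. R *v v + c) ` (x ` {..CARD('n)}) = y ` {..CARD('n)}"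
  proof -
    have "(\<lambda>v. R *v v + c) ` (x ` {..D}) = y' ` {..D}"
      unfolding image_image Rv using fx unfolding w_def D_def by (intro image_cong) auto
    then show ?thesis using Yeq unfolding D_def by simp
  qed
  have tau: "norm c \<le> h"
  proof -
    have "(\<Sum>i\<le>D. y' i - x i) = (real D + 1) *\<^sub>R c"
      using sx unfolding D_def[symmetric] by (simp add: sum_subtractf sumy')
    then have "(real D + 1) * norm c = norm (\<Sum>i\<le>D. y' i - x i)" by simp
    also have "\<dots> \<le> (\<Sum>i\<le>D. norm (y' i - x i))" by (rule norm_sum)
    also have "\<dots> \<le> (\<Sum>i\<le>D. h)" using e by (intro sum_mono) auto
    also have "\<dots> = (real D + 1) * h" by simp
    finally show ?thesis by simp
  qed
  have fr: "2 *\<^sub>R (\<Sum>i\<le>D. (x i \<bullet> v) *\<^sub>R x i) = v" for v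
    using simplex_frame[OF rx sx] unfolding D_def .
  have suma: "(\<Sum>i\<le>D. x i \<bullet> v) = 0" for v
    using sx unfolding D_def[symmetric] by (simp add: inner_sum_left[symmetric])
  have diff1: "(R - mat 1) *v v = (\<Sum>i\<le>D. (2 * (x i \<bullet> v)) *\<^sub>R (w i - x i))" for v
  proof -
    have "(R - mat 1) *v v = f v - v" by (simp add: matrix_vector_mult_diff_rdistrib Rv)
    also have "\<dots> = (\<Sum>i\<le>D. (2 * (x i \<bullet> v)) *\<^sub>R w i) - (\<Sum>i\<le>D. (2 * (x i \<bullet> v)) *\<^sub>R x i)"
      using fr[of v] unfolding f_def D_def by (simp add: scaleR_sum_right)
    finally show ?thesis by (simp add: sum_subtractf scaleR_diff_right)
  qed
  have diff2: "(R - mat 1) *v v = (\<Sum>i\<le>D. (2 * (x i \<bullet> v)) *\<^sub>R (y' i - x i))" for v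
  proof -
    have "(\<Sum>i\<le>D. (2 * (x i \<bullet> v)) *\<^sub>R (w i - x i))
        = (\<Sum>i\<le>D. (2 * (x i \<bullet> v)) *\<^sub>R (y' i - x i)) - (\<Sum>i\<le>D. (2 * (x i \<bullet> v)) *\<^sub>R c)"
      unfolding w_def by (simp add: sum_subtractf[symmetric] algebra_simps)
    also have "(\<Sum>i\<le>D. (2 * (x i \<bullet> v)) *\<^sub>R c) = (2 * (\<Sum>i\<le>D. x i \<bullet> v)) *\<^sub>R c"
      by (simp add: scaleR_sum_left sum_distrib_left)
    finally show ?thesis using diff1 suma by simp
  qed
  define B where "B = (if D = 1 then 0 else 2 * h * sqrt ((real D + 1) / 2))"
  have bound: "norm ((R - mat 1) *v v) \<le> B * norm v" for v
  proof (cases "D = 1")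
    case True
    have "norm ((w 0 - x 0) - (w 1 - x 1)) = norm ((y' 0 - x 0) - (y' 1 - x 1))"
      unfolding w_def by (simp add: algebra_simps)
    also have "\<dots> \<le> norm (y' 0 - x 0) + norm (y' 1 - x 1)" by (rule norm_triangle_ineq4)
    also have "\<dots> \<le> h + h" using e True by (intro add_mono) auto
    finally have "norm ((w 0 - x 0) - (w 1 - x 1)) < 1" using hlt by simp
    then have wx: "w 0 = x 0 \<and> w 1 = x 1"
      using dim1_case[OF rx sx rw sw] True unfolding D_def by auto
    have at1: "{..D} = {0, 1::nat}" using True by auto
    have "(R - mat 1) *v v = 0" unfolding diff1 at1 using wx by simp
    then show ?thesis by (simp add: B_def True)
  next
    case False
    define a where "a i = x i \<bullet> v" for i
    have "norm ((R - mat 1) *v v) \<le> (\<Sum>i\<le>D. norm ((2 * a i) *\<^sub>R (y' i - x i)))"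
      unfolding diff2 a_def by (rule norm_sum)
    also have "\<dots> \<le> (\<Sum>i\<le>D. 2 * h * \<bar>a i\<bar>)"
    proof (rule sum_mono)
      fix i assume "i \<in> {..D}"
      then have "norm (y' i - x i) \<le> h" using e by auto
      then have "\<bar>2 * a i\<bar> * norm (y' i - x i) \<le> \<bar>2 * a i\<bar> * h" by (intro mult_left_mono) auto
      moreover have "norm ((2 * a i) *\<^sub>R (y' i - x i)) = \<bar>2 * a i\<bar> * norm (y' i - x i)" by (rule norm_scaleR)
      moreover have "\<bar>2 * a i\<bar> * h = 2 * h * \<bar>a i\<bar>" by (simp add: abs_mult)
      ultimately show "norm ((2 * a i) *\<^sub>R (y' i - x i)) \<le> 2 * h * \<bar>a i\<bar>" by simp
    qed
    also have "\<dots> = 2 * h * (\<Sum>i\<le>D. \<bar>a i\<bar>)" by (simp add: sum_distrib_left)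
    also have "(\<Sum>i\<le>D. \<bar>a i\<bar>) \<le> sqrt ((real D + 1) / 2) * norm v"
    proof -
      have sq: "(\<Sum>i\<le>D. (a i)^2) = (norm v)^2 / 2"
      proof -
        have "(\<Sum>i\<le>D. (a i)^2) = v \<bullet> (\<Sum>i\<le>D. (x i \<bullet> v) *\<^sub>R x i)"
          unfolding a_def by (simp add: inner_sum_right power2_eq_square inner_commute)
        also have "(\<Sum>i\<le>D. (x i \<bullet> v) *\<^sub>R x i) = (1/2) *\<^sub>R v" 
        proof -
          have "(1/2::real) *\<^sub>R (2 *\<^sub>R (\<Sum>i\<le>D. (x i \<bullet> v) *\<^sub>R x i)) = (1/2) *\<^sub>R v"
            using fr[of v] by simp
          then show ?thesis by simp
        qed
        finally show ?thesis by (simp add: power2_norm_eq_inner)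
      qed
      have "(\<Sum>i\<le>D. \<bar>a i\<bar> * 1)^2 \<le> (\<Sum>i\<le>D. (\<bar>a i\<bar>)^2) * (\<Sum>i\<le>D. 1^2)"
        by (rule Cauchy_Schwarz_ineq_sum)
      then have "(\<Sum>i\<le>D. \<bar>a i\<bar>)^2 \<le> ((real D + 1) / 2) * (norm v)^2"
        using sq by (simp add: algebra_simps)
      then have "sqrt ((\<Sum>i\<le>D. \<bar>a i\<bar>)^2) \<le> sqrt (((real D + 1) / 2) * (norm v)^2)"
        by (rule real_sqrt_le_mono)
      moreover have "sqrt ((\<Sum>i\<le>D. \<bar>a i\<bar>)^2) = (\<Sum>i\<le>D. \<bar>a i\<bar>)"
        by (simp add: sum_nonneg)
      moreover have "sqrt (((real D + 1) / 2) * (norm v)^2) = sqrt ((real D + 1) / 2) * norm v"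
        by (simp only: real_sqrt_mult real_sqrt_abs abs_norm_cancel)
      ultimately show ?thesis by simp
    qed
    then have "2 * h * (\<Sum>i\<le>D. \<bar>a i\<bar>) \<le> 2 * h * (sqrt ((real D + 1) / 2) * norm v)"
      using h0 by (intro mult_left_mono) auto
    finally show ?thesis using False by (simp add: B_def)
  qed
  have on: "onorm (\<lambda>v. (R - mat 1) *v v) \<le> B" by (rule onorm_le) (rule bound)
  have fin: "B + norm c \<le> 2 * sqrt (real D + 1) * h"
  proof (cases "D = 1")
    case True
    have "1 \<le> sqrt (2::real)" by simp
    then have "1 \<le> 2 * sqrt (2::real)" by linarith
    then have "1 * h \<le> (2 * sqrt 2) * h" using h0 by (rule mult_right_mono)
    then have "h \<le> 2 * sqrt 2 * h" by simp
    then show ?thesis using tau True by (simp add: B_def)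
  next
    case False
    have "D \<ge> 1" unfolding D_def by simp
    with False have "real D + 1 \<ge> 3" by simp
    from arith_aux[OF this h0] show ?thesis using tau False by (simp add: B_def)
  qed
  have sp: "sqrt (real D + 1) > 0" by simp
  have "1 / (2 * sqrt (real D + 1)) * (onorm (\<lambda>v. (R - mat 1) *v v) + norm c)
        \<le> 1 / (2 * sqrt (real D + 1)) * (2 * sqrt (real D + 1) * h)"
    using on fin sp by (intro mult_left_mono) auto
  also have "\<dots> = h" using sp by simp
  finally have "1 / (2 * sqrt (real D + 1)) * (onorm (\<lambda>v. (R - mat 1) *v v) + norm c) \<le> h" .
  then show ?thesis using orth img unfolding h_def D_def by blast
qed
end
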